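(* Let $c>0$ be an integer, $P$ an admissible Hilbert polynomial, and $\Lambda$ a finite composition of the operators $\lambda$ and $\sigma$. Then the number of expandable minimal monomial generators of the lexicographic ideal $L^{\Lambda(P)}_{c+\deg\Lambda(P)}$ is greater than or equal to the number of expandable minimal monomial generators of $L^P_{c+\deg P}$.
   Context: $\Bbbk$ is an algebraically closed field. Binomial coefficients are polynomials: $\binom{t+a}{b}=\frac{(t+a)\cdots(t+a-b+1)}{b!}$ for $b\ge0$, $0$ for $b<0$. An admissible Hilbert polynomial (Hilbert polynomial of a nonempty closed subscheme of a projective space) has a unique Gotzmann expression $P(t)=\sum_{j=1}^r\binom{t+b_j-(j-1)}{b_j}$ with $b_1\ge\dots\ge b_r\ge0$; $\sigma(P):=1+P$ and $\lambda(P):=\sum_{j=1}^r\binom{t+b_j+1-(j-1)}{b_j+1}$. Lexicographic order: $x^u>x^v$ if the first nonzero coordinate of $u-v$ is positive. For admissible $Q$ and $n>\deg Q$, the lexicographic ideal $L^Q_n\subset\Bbbk[x_0,\dots,x_n]$ is the saturation with respect to $\langle x_0,\dots,x_n\rangle$ of the monomial ideal whose degree-$i$ piece is spanned by the $\dim_\Bbbk I_i$ lex-largest degree-$i$ monomials, for any homogeneous $I$ with Hilbert polynomial $Q$. For a monomial $g$, $\max g$ is the largest $j$ with $x_j\mid g$. A minimal monomial generator $g$ of a saturated Borel monomial ideal $I\subseteq\Bbbk[x_0,\dots,x_n]$ is expandable if the set $\{gx_{i+1}/x_i: x_i\mid g,\ 0\le i<n-1\}$ contains no minimal monomial generator of $I$.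 *)

theory Defs
  imports "HOL-Computational_Algebra.Polynomial"
begin

text \<open>Binomial coefficient as a polynomial in t: binom(t+a, b) = (t+a)...(t+a-b+1)/b!.\<close>
definition binp :: "int \<Rightarrow> nat \<Rightarrow> real poly" where
  "binp a b = smult (1 / fact b) (\<Prod>i<b. [: of_int a - of_nat i, 1 :])"

text \<open>Gotzmann polynomial of a list b_1,...,b_r (0-based index k = j-1).\<close>
definition gotz :: "nat list \<Rightarrow> real poly" where
  "gotz bs = (\<Sum>k<length bs. binp (int (bs ! k) - int k) (bs ! k))"

definition gotzmann_expr :: "real poly \<Rightarrow> nat list \<Rightarrow> bool" where
  "gotzmann_expr P bs \<longleftrightarrow> bs \<noteq> [] \<and> sorted_wrt (\<ge>) bs \<and> P = gotz bs"

definition admissible :: "real poly \<Rightarrow> bool" where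
  "admissible P \<longleftrightarrow> (\<exists>bs. gotzmann_expr P bs)"

definition sigma_op :: "real poly \<Rightarrow> real poly" where
  "sigma_op P = 1 + P"

definition lambda_op :: "real poly \<Rightarrow> real poly" where
  "lambda_op P = gotz (map Suc (THE bs. gotzmann_expr P bs))"

datatype hop = Lam | Sig

fun apply_ops :: "hop list \<Rightarrow> real poly \<Rightarrow> real poly" where
  "apply_ops [] P = P"
| "apply_ops (Lam # os) P = lambda_op (apply_ops os P)"
| "apply_ops (Sig # os) P = sigma_op (apply_ops os P)"

definition mons :: "nat \<Rightarrow> (nat \<Rightarrow> nat) set" where
  "mons n = {u. \<forall>j>n. u j = 0}"

definition mdeg :: "nat \<Rightarrow> (nat \<Rightarrow> nat) \<Rightarrow> nat" where
  "mdeg n u = (\<Sum>j\<le>n. u j)"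

definition lex_gt :: "(nat \<Rightarrow> nat) \<Rightarrow> (nat \<Rightarrow> nat) \<Rightarrow> bool" where
  "lex_gt u v \<longleftrightarrow> (\<exists>k. v k < u k \<and> (\<forall>j<k. u j = v j))"

text \<open>m (of degree i) lies among the dim I_i = binom(n+i,n) - Q(i) lex-largest
  monomials of degree i (for i large, where the Hilbert function equals Q).\<close>
definition in_lex_segment :: "real poly \<Rightarrow> nat \<Rightarrow> (nat \<Rightarrow> nat) \<Rightarrow> bool" where
  "in_lex_segment Q n m \<longleftrightarrow>
     real (card {v \<in> mons n. mdeg n v = mdeg n m \<and> lex_gt v m})
       < real ((n + mdeg n m) choose n) - poly Q (real (mdeg n m))"

text \<open>The lexicographic ideal L^Q_n: saturation of the lex-segment ideal with
  Hilbert polynomial Q. A monomial m is in the saturation iff m*w lies in the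
  ideal for all monomials w of sufficiently large degree; the saturation only
  depends on the ideal in large degrees, where its degree-i part is the lex
  segment of size binom(n+i,n) - Q(i).\<close>
definition lex_ideal :: "real poly \<Rightarrow> nat \<Rightarrow> (nat \<Rightarrow> nat) set" where
  "lex_ideal Q n = {m \<in> mons n. \<exists>d. \<forall>w \<in> mons n. d \<le> mdeg n (\<lambda>j. m j + w j) \<longrightarrow>
       in_lex_segment Q n (\<lambda>j. m j + w j)}"

definition mdvd :: "(nat \<Rightarrow> nat) \<Rightarrow> (nat \<Rightarrow> nat) \<Rightarrow> bool" where
  "mdvd u v \<longleftrightarrow> (\<forall>j. u j \<le> v j)"

definition min_gens :: "(nat \<Rightarrow> nat) set \<Rightarrow> (nat \<Rightarrow> nat) set" where
  "min_gens I = {g \<in> I. \<forall>h \<in> I. mdvd h g \<longrightarrow> h = g}"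

text \<open>g * x_{i+1} / x_i\<close>
definition shift_mon :: "(nat \<Rightarrow> nat) \<Rightarrow> nat \<Rightarrow> (nat \<Rightarrow> nat)" where
  "shift_mon g i = (g(i := g i - 1))(Suc i := g (Suc i) + 1)"

definition expandable :: "nat \<Rightarrow> (nat \<Rightarrow> nat) set \<Rightarrow> (nat \<Rightarrow> nat) \<Rightarrow> bool" where
  "expandable n I g \<longleftrightarrow> g \<in> min_gens I \<and>
     (\<forall>i. i + 1 < n \<and> 0 < g i \<longrightarrow> shift_mon g i \<notin> min_gens I)"

definition num_expandable :: "nat \<Rightarrow> (nat \<Rightarrow> nat) set \<Rightarrow> nat" where
  "num_expandable n I = card {g. expandable n I g}"

end

theory Submission
  imports Defs "HOL-Library.Multiset"
begin

lemma lex_gt_trans: assumes "lex_gt a b" "lex_gt b c" shows "lex_gt a c"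
proof -
  obtain k where k: "b k < a k" "\<forall>j<k. a j = b j" using assms(1) lex_gt_def by auto
  obtain l where l: "c l < b l" "\<forall>j<l. b j = c j" using assms(2) lex_gt_def by auto
  consider "k < l" | "k = l" | "l < k" by linarith
  then show ?thesis
  proof cases
    case 1 then show ?thesis unfolding lex_gt_def using k l by (intro exI[of _ k]) auto
  next
    case 2 then show ?thesis unfolding lex_gt_def using k l by (intro exI[of _ k]) auto
  next
    case 3 then show ?thesis unfolding lex_gt_def using k l by (intro exI[of _ l]) auto
  qed
qed

lemma lex_gt_irrefl[simp]: "\<not> lex_gt a a" by (simp add: lex_gt_def)

lemma lex_gt_asym: "lex_gt a b \<Longrightarrow> \<not> lex_gt b a"
  using lex_gt_trans lex_gt_irrefl by blast

lemma lex_total: assumes "a \<noteq> b" shows "lex_gt a b \<or> lex_gt b a"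
proof -
  have ex: "\<exists>k. a k \<noteq> b k" using assms by auto
  define m where "m = (LEAST k. a k \<noteq> b k)"
  have m1: "a m \<noteq> b m" unfolding m_def using LeastI_ex[OF ex] .
  have m2: "\<forall>j<m. a j = b j" unfolding m_def using not_less_Least by blast
  show ?thesis
  proof (cases "a m < b m")
    case True then show ?thesis unfolding lex_gt_def using m2 by (intro disjI2 exI[of _ m]) auto
  next
    case False then show ?thesis unfolding lex_gt_def using m1 m2 by (intro disjI1 exI[of _ m]) auto
  qed
qed

lemma le_lex: assumes "\<forall>j. a j \<le> b j" shows "a = b \<or> lex_gt b a"
proof (cases "a = b")
  case False
  then have "lex_gt a b \<or> lex_gt b a" by (rule lex_total)
  moreover have "\<not> lex_gt a b" using assms unfolding lex_gt_def by (auto simp: not_less)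
  ultimately show ?thesis by blast
qed simp

lemma card_mons_deg: "card {u \<in> mons n. mdeg n u = D} = (n + D) choose n"
proof -
  let ?L = "{l::nat list. size l = Suc n \<and> sum_list l = D}"
  have sl: "sum_list (map u [0..<Suc n]) = mdeg n u" for u
    unfolding mdeg_def by (simp add: sum_list_distinct_conv_sum_set atLeast0LessThan lessThan_Suc_atMost[symmetric] del: upt_Suc)
  have "bij_betw (\<lambda>u. map u [0..<Suc n]) {u \<in> mons n. mdeg n u = D} ?L"
  proof (rule bij_betwI')
    fix x y assume x: "x \<in> {u \<in> mons n. mdeg n u = D}" and y: "y \<in> {u \<in> mons n. mdeg n u = D}"
    show "(map x [0..<Suc n] = map y [0..<Suc n]) = (x = y)"
    proof
      assume h: "map x [0..<Suc n] = map y [0..<Suc n]"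
      show "x = y"
      proof
        fix j show "x j = y j"
        proof (cases "j \<le> n")
          case True
          have "map x [0..<Suc n] ! j = map y [0..<Suc n] ! j" using h by (simp only:)
          then show ?thesis using True by (metis add_0 diff_zero le_imp_less_Suc nth_map_upt)
        next
          case False then show ?thesis using x y by (auto simp: mons_def)
        qed
      qed
    qed simp
  next
    fix x assume "x \<in> {u \<in> mons n. mdeg n u = D}"
    then show "map x [0..<Suc n] \<in> ?L" using sl by simp
  next
    fix l assume l: "l \<in> ?L"
    define u where "u = (\<lambda>j. if j \<le> n then l ! j else 0)"
    have mu: "map u [0..<Suc n] = l"
      using l by (intro nth_equalityI) (auto simp: u_def simp del: upt_Suc)
    have "u \<in> {u \<in> mons n. mdeg n u = D}"
      using mu l sl[of u] by (auto simp: mons_def u_def)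
    then show "\<exists>x\<in>{u \<in> mons n. mdeg n u = D}. l = map x [0..<Suc n]" using mu by metis
  qed
  then have "card {u \<in> mons n. mdeg n u = D} = card ?L" by (rule bij_betw_same_card)
  also have "\<dots> = (D + n) choose D" using card_length_sum_list[of "Suc n" D] by simp
  also have "\<dots> = (n + D) choose n" using binomial_symmetric[of D "D+n"] by (simp add: add.commute)
  finally show ?thesis .
qed


lemma mdeg_split:
  assumes "t < n"
  shows "mdeg n u = sum u {..t} + mdeg (n - Suc t) (\<lambda>j. u (j + Suc t))"
proof -
  have "{..n} = {..t} \<union> {Suc t..n}" using assms by auto
  then have "sum u {..n} = sum u {..t} + sum u {Suc t..n}"
    by (simp add: sum.union_disjoint ivl_disj_int)
  also have "sum u {Suc t..n} = sum (\<lambda>j. u (j + Suc t)) {0..n - Suc t}"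
    using sum.shift_bounds_cl_nat_ivl[of u 0 "Suc t" "n - Suc t"] assms by simp
  finally show ?thesis unfolding mdeg_def by (simp add: atLeast0AtMost)
qed

lemma card_chunk:
  assumes tn: "t < n" and p0: "\<forall>j>t. p j = 0" and SD: "sum p {..t} \<le> D"
  shows "card {u \<in> mons n. mdeg n u = D \<and> (\<forall>j\<le>t. u j = p j)}
       = (D - sum p {..t} + (n - Suc t)) choose (n - Suc t)"
proof -
  let ?S = "sum p {..t}"
  let ?k = "n - Suc t"
  let ?A = "{u \<in> mons n. mdeg n u = D \<and> (\<forall>j\<le>t. u j = p j)}"
  have sumeq: "(\<forall>j\<le>t. u j = p j) \<Longrightarrow> sum u {..t} = ?S" for u by simp
  have "bij_betw (\<lambda>u j. u (j + Suc t)) ?A {w \<in> mons ?k. mdeg ?k w = D - ?S}"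
  proof (rule bij_betwI')
    fix x y assume x: "x \<in> ?A" and y: "y \<in> ?A"
    show "((\<lambda>j. x (j + Suc t)) = (\<lambda>j. y (j + Suc t))) = (x = y)"
    proof
      assume h: "(\<lambda>j. x (j + Suc t)) = (\<lambda>j. y (j + Suc t))"
      show "x = y"
      proof
        fix j
        show "x j = y j"
        proof (cases "j \<le> t")
          case True then show ?thesis using x y by auto
        next
          case False
          then have "j = (j - Suc t) + Suc t" by simp
          then show ?thesis using fun_cong[OF h, of "j - Suc t"] by metis
        qed
      qed
    qed simp
  next
    fix x assume x: "x \<in> ?A"
    then have "mdeg n x = D" "\<forall>j\<le>t. x j = p j" "x \<in> mons n" by auto
    then show "(\<lambda>j. x (j + Suc t)) \<in> {w \<in> mons ?k. mdeg ?k w = D - ?S}"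
      using mdeg_split[OF tn, of x] sumeq[of x] by (auto simp: mons_def)
  next
    fix w assume w: "w \<in> {w \<in> mons ?k. mdeg ?k w = D - ?S}"
    define u where "u = (\<lambda>j. if j \<le> t then p j else w (j - Suc t))"
    have sh: "(\<lambda>j. u (j + Suc t)) = w" by (auto simp: u_def)
    have "u \<in> mons n" using w tn by (auto simp: mons_def u_def)
    moreover have "\<forall>j\<le>t. u j = p j" by (simp add: u_def)
    moreover have "mdeg n u = D" using mdeg_split[OF tn, of u] sh w sumeq[of u] SD
      by (simp add: u_def)
    ultimately show "\<exists>x\<in>?A. w = (\<lambda>j. x (j + Suc t))" using sh by auto
  qed
  then have "card ?A = card {w \<in> mons ?k. mdeg ?k w = D - ?S}" by (rule bij_betw_same_card)
  also have "\<dots> = (?k + (D - ?S)) choose ?k" by (rule card_mons_deg)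
  finally show ?thesis by (simp add: add.commute)
qed

lemma finite_mons_deg: "finite {u \<in> mons n. mdeg n u = D}"
proof -
  have "card {u \<in> mons n. mdeg n u = D} > 0" unfolding card_mons_deg by simp
  then show ?thesis using card_ge_0_finite by blast
qed

definition pvec :: "nat \<Rightarrow> nat list \<Rightarrow> nat \<Rightarrow> nat" where
  "pvec n bs j = length (filter (\<lambda>b. n - Suc b = j) bs)"

lemma pvec_Nil[simp]: "pvec n [] = (\<lambda>_. 0)" by (auto simp: pvec_def)

lemma pvec_snoc: "pvec n (bs @ [b]) = (pvec n bs)(n - Suc b := Suc (pvec n bs (n - Suc b)))"
  by (auto simp: pvec_def)

lemma pvec_Cons: "pvec n (b # bs) j = (if n - Suc b = j then 1 else 0) + pvec n bs j"
  by (auto simp: pvec_def)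

lemma pvec_pos: assumes "0 < pvec n bs j" shows "\<exists>b\<in>set bs. j = n - Suc b"
proof -
  have "filter (\<lambda>b. n - Suc b = j) bs \<noteq> []" using assms unfolding pvec_def by auto
  then obtain x where "x \<in> set (filter (\<lambda>b. n - Suc b = j) bs)" using last_in_set by blast
  then show ?thesis by auto
qed

lemma pvec_sum: "\<forall>b\<in>set bs. n - Suc b \<le> t \<Longrightarrow> sum (pvec n bs) {..t} = length bs"
proof (induction bs)
  case Nil then show ?case by simp
next
  case (Cons b bs)
  have "sum (pvec n (b # bs)) {..t} = sum (\<lambda>j. if n - Suc b = j then 1 else 0) {..t} + sum (pvec n bs) {..t}"
    unfolding pvec_Cons by (simp add: sum.distrib)
  also have "sum (\<lambda>j. if n - Suc b = j then (1::nat) else 0) {..t} = 1"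
    using Cons.prems by (simp add: sum.delta)
  finally show ?case using Cons by simp
qed

lemma lex_snoc:
  assumes "\<forall>j>t. p j = 0"
  shows "lex_gt (p(t := Suc (p t))) u \<longleftrightarrow> lex_gt p u \<or> (\<forall>j\<le>t. u j = p j)"
proof
  assume "lex_gt (p(t := Suc (p t))) u"
  then obtain k where k: "u k < (p(t := Suc (p t))) k" "\<forall>j<k. (p(t := Suc (p t))) j = u j"
    unfolding lex_gt_def by blast
  consider "k < t" | "k = t" | "t < k" by linarith
  then show "lex_gt p u \<or> (\<forall>j\<le>t. u j = p j)"
  proof cases
    case 1 then show ?thesis using k unfolding lex_gt_def by (intro disjI1 exI[of _ k]) auto
  next
    case 2
    show ?thesis
    proof (cases "u t < p t")
      case True then show ?thesis using k 2 unfolding lex_gt_def by (intro disjI1 exI[of _ k]) auto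
    next
      case False
      then have "u t = p t" using k 2 by auto
      then show ?thesis using k 2 by (auto simp: le_less)
    qed
  next
    case 3 then show ?thesis using k assms by auto
  qed
next
  assume h: "lex_gt p u \<or> (\<forall>j\<le>t. u j = p j)"
  then show "lex_gt (p(t := Suc (p t))) u"
  proof
    assume "lex_gt p u"
    then obtain k where k: "u k < p k" "\<forall>j<k. p j = u j" unfolding lex_gt_def by blast
    have "k \<le> t" using k(1) assms by (metis less_nat_zero_code not_le)
    then show ?thesis using k unfolding lex_gt_def by (intro exI[of _ k]) auto
  next
    assume "\<forall>j\<le>t. u j = p j"
    then show ?thesis unfolding lex_gt_def by (intro exI[of _ t]) auto
  qed
qed

lemma gotz_snoc: "gotz (bs @ [b]) = gotz bs + binp (int b - int (length bs)) b"
  unfolding gotz_def by (simp add: nth_append)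

lemma poly_binp:
  assumes "r \<le> D"
  shows "poly (binp (int b - int r) b) (real D) = real ((D - r + b) choose b)"
proof -
  have "real ((D - r + b) choose b) = real (D - r + b) gchoose b" by (rule binomial_gbinomial)
  also have "\<dots> = (\<Prod>i=0..<b. real (D - r + b) - real i) / fact b" by (rule gbinomial_prod_rev)
  also have "\<dots> = (\<Prod>i<b. real_of_int (int b - int r) - real i + real D) / fact b"
    using assms by (simp add: atLeast0LessThan of_nat_diff algebra_simps)
  finally show ?thesis unfolding binp_def by (simp add: poly_prod)
qed

lemma count_std:
  assumes "sorted_wrt (\<ge>) bs" "\<forall>b\<in>set bs. b < n" "length bs \<le> D"
  shows "real (card {u \<in> mons n. mdeg n u = D \<and> lex_gt (pvec n bs) u}) = poly (gotz bs) (real D)"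
  using assms
proof (induction bs rule: rev_induct)
  case Nil then show ?case by (simp add: lex_gt_def gotz_def)
next
  case (snoc b bs)
  let ?p = "pvec n bs"
  let ?t = "n - Suc b"
  have sb: "sorted_wrt (\<ge>) bs" and ge: "\<forall>x\<in>set bs. b \<le> x" using snoc.prems(1) by (auto simp: sorted_wrt_append)
  have bn: "b < n" using snoc.prems(2) by simp
  have IH: "real (card {u \<in> mons n. mdeg n u = D \<and> lex_gt ?p u}) = poly (gotz bs) (real D)"
    using snoc.IH sb snoc.prems(2,3) by simp
  have supp: "\<forall>j>?t. ?p j = 0"
  proof (intro allI impI)
    fix j assume j: "?t < j"
    show "?p j = 0"
    proof (rule ccontr)
      assume "?p j \<noteq> 0"
      then obtain x where "x \<in> set bs" "j = n - Suc x" using pvec_pos by blast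
      then show False using ge j by fastforce
    qed
  qed
  have idx: "\<forall>x\<in>set bs. n - Suc x \<le> ?t" using ge by auto
  let ?A = "{u \<in> mons n. mdeg n u = D \<and> lex_gt ?p u}"
  let ?B = "{u \<in> mons n. mdeg n u = D \<and> (\<forall>j\<le>?t. u j = ?p j)}"
  have eq: "{u \<in> mons n. mdeg n u = D \<and> lex_gt (pvec n (bs @ [b])) u} = ?A \<union> ?B"
    unfolding pvec_snoc lex_snoc[OF supp] by blast
  have disj: "?A \<inter> ?B = {}"
  proof (rule ccontr)
    assume "?A \<inter> ?B \<noteq> {}"
    then obtain u where u: "lex_gt ?p u" "\<forall>j\<le>?t. u j = ?p j" by blast
    then obtain k where k: "u k < ?p k" "\<forall>j<k. ?p j = u j" unfolding lex_gt_def by blast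
    have "k \<le> ?t" using k(1) supp by (metis less_nat_zero_code not_le)
    then show False using u(2) k(1) by auto
  qed
  have fA: "finite ?A" and fB: "finite ?B" by (auto intro: finite_subset[OF _ finite_mons_deg[of n D]])
  have cB: "card ?B = (D - length bs + b) choose b"
  proof -
    have "card ?B = (D - sum ?p {..?t} + (n - Suc ?t)) choose (n - Suc ?t)"
      using card_chunk[of ?t n ?p D] bn supp pvec_sum[OF idx] snoc.prems(3) by simp
    then show ?thesis using pvec_sum[OF idx] bn by (simp add: Suc_diff_Suc)
  qed
  have "real (card {u \<in> mons n. mdeg n u = D \<and> lex_gt (pvec n (bs @ [b])) u})
      = real (card ?A) + real (card ?B)" unfolding eq using card_Un_disjoint[OF fA fB disj] by simp
  also have "\<dots> = poly (gotz (bs @ [b])) (real D)"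
    unfolding IH cB gotz_snoc using poly_binp[of "length bs" D b] snoc.prems(3) by simp
  finally show ?case .
qed

definition Lset :: "nat \<Rightarrow> (nat \<Rightarrow> nat) \<Rightarrow> (nat \<Rightarrow> nat) set" where
  "Lset n p = {m \<in> mons n. \<not> lex_gt p m}"

lemma seg_iff:
  assumes sb: "sorted_wrt (\<ge>) bs" and bn: "\<forall>b\<in>set bs. b < n" and u: "u \<in> mons n"
    and len: "length bs \<le> mdeg n u"
  shows "in_lex_segment (gotz bs) n u \<longleftrightarrow> \<not> lex_gt (pvec n bs) u"
proof -
  define D where "D = mdeg n u"
  define p where "p = pvec n bs"
  let ?All = "{v \<in> mons n. mdeg n v = D}"
  let ?S = "{v \<in> mons n. mdeg n v = D \<and> lex_gt p v}"
  let ?A = "{v \<in> mons n. mdeg n v = D \<and> lex_gt v u}"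
  have fin: "finite ?All" by (rule finite_mons_deg)
  have SAll: "?S \<subseteq> ?All" by blast
  have cS: "real (card ?S) = poly (gotz bs) (real D)"
    unfolding p_def using count_std[OF sb bn] len D_def by simp
  have cAll: "card ?All = (n + D) choose n" by (rule card_mons_deg)
  have cD: "real (card (?All - ?S)) = real (card ?All) - real (card ?S)"
    using card_Diff_subset[OF finite_subset[OF SAll fin] SAll] card_mono[OF fin SAll] by (simp add: of_nat_diff)
  have e: "real ((n + D) choose n) - poly (gotz bs) (real D) = real (card (?All - ?S))"
    using cD cS cAll by simp
  have seg: "in_lex_segment (gotz bs) n u \<longleftrightarrow> real (card ?A) < real (card (?All - ?S))"
    unfolding in_lex_segment_def D_def[symmetric] e[symmetric] by (rule refl)
  show ?thesis
  proof (cases "lex_gt p u")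
    case False
    have sub: "?A \<subset> ?All - ?S"
    proof
      show "?A \<subseteq> ?All - ?S"
      proof
        fix v assume v: "v \<in> ?A"
        have "\<not> lex_gt p v" using v False lex_gt_trans by blast
        then show "v \<in> ?All - ?S" using v by blast
      qed
      have "u \<in> ?All - ?S" using u False D_def by blast
      moreover have "u \<notin> ?A" by simp
      ultimately show "?A \<noteq> ?All - ?S" by blast
    qed
    have "card ?A < card (?All - ?S)" by (rule psubset_card_mono[OF _ sub]) (use fin in blast)
    then show ?thesis using seg False p_def by simp
  next
    case True
    have sub: "?All - ?S \<subseteq> ?A"
    proof
      fix v assume v: "v \<in> ?All - ?S"
      then have nv: "\<not> lex_gt p v" by blast
      have "v \<noteq> u" using nv True by blast
      then have "lex_gt v u \<or> lex_gt u v" by (rule lex_total)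
      moreover have "\<not> lex_gt u v" using nv True lex_gt_trans by blast
      ultimately show "v \<in> ?A" using v by blast
    qed
    have "card (?All - ?S) \<le> card ?A" by (rule card_mono[OF _ sub]) (rule finite_subset[OF _ fin], blast)
    then show ?thesis using seg True p_def by simp
  qed
qed

lemma mdeg_add: "mdeg n (\<lambda>j. m j + w j) = mdeg n m + mdeg n w"
  by (simp add: mdeg_def sum.distrib)

lemma pvec_lt: assumes "\<forall>b\<in>set bs. b < n" "0 < pvec n bs j" shows "j < n"
proof -
  obtain b where "b \<in> set bs" "j = n - Suc b" using pvec_pos[OF assms(2)] by blast
  then show ?thesis using assms(1) by auto
qed

lemma lex_ideal_eq:
  assumes sb: "sorted_wrt (\<ge>) bs" and bn: "\<forall>b\<in>set bs. b < n"
  shows "lex_ideal (gotz bs) n = Lset n (pvec n bs)"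
proof
  let ?p = "pvec n bs"
  show "lex_ideal (gotz bs) n \<subseteq> Lset n ?p"
  proof
    fix m assume m: "m \<in> lex_ideal (gotz bs) n"
    then have mm: "m \<in> mons n" unfolding lex_ideal_def by blast
    obtain d where d: "\<forall>w \<in> mons n. d \<le> mdeg n (\<lambda>j. m j + w j) \<longrightarrow>
       in_lex_segment (gotz bs) n (\<lambda>j. m j + w j)" using m unfolding lex_ideal_def by blast
    have "\<not> lex_gt ?p m"
    proof
      assume "lex_gt ?p m"
      then obtain k where k: "m k < ?p k" "\<forall>j<k. ?p j = m j" unfolding lex_gt_def by blast
      have kn: "k < n" using pvec_lt[OF bn, of k] k(1) by simp
      define w where "w = (\<lambda>j. if j = n then d + length bs else 0)"
      have w: "w \<in> mons n" by (simp add: w_def mons_def)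
      have mw: "mdeg n w = d + length bs" by (simp add: mdeg_def w_def)
      have mwm: "(\<lambda>j. m j + w j) \<in> mons n" using w mm by (simp add: mons_def)
      have "in_lex_segment (gotz bs) n (\<lambda>j. m j + w j)" using d w mdeg_add[of n m w] mw by simp
      then have "\<not> lex_gt ?p (\<lambda>j. m j + w j)"
        using seg_iff[OF sb bn mwm] mdeg_add[of n m w] mw by simp
      moreover have "lex_gt ?p (\<lambda>j. m j + w j)"
        unfolding lex_gt_def using k kn by (intro exI[of _ k]) (auto simp: w_def)
      ultimately show False by blast
    qed
    then show "m \<in> Lset n ?p" using mm by (simp add: Lset_def)
  qed
next
  let ?p = "pvec n bs"
  show "Lset n ?p \<subseteq> lex_ideal (gotz bs) n"
  proof
    fix m assume m: "m \<in> Lset n ?p"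
    then have mm: "m \<in> mons n" and nl: "\<not> lex_gt ?p m" by (auto simp: Lset_def)
    have "\<forall>w \<in> mons n. length bs \<le> mdeg n (\<lambda>j. m j + w j) \<longrightarrow>
       in_lex_segment (gotz bs) n (\<lambda>j. m j + w j)"
    proof (intro ballI impI)
      fix w assume w: "w \<in> mons n" and le: "length bs \<le> mdeg n (\<lambda>j. m j + w j)"
      have mwm: "(\<lambda>j. m j + w j) \<in> mons n" using w mm by (simp add: mons_def)
      have "m = (\<lambda>j. m j + w j) \<or> lex_gt (\<lambda>j. m j + w j) m" by (rule le_lex) simp
      then have "\<not> lex_gt ?p (\<lambda>j. m j + w j)" using nl lex_gt_trans by metis
      then show "in_lex_segment (gotz bs) n (\<lambda>j. m j + w j)" using seg_iff[OF sb bn mwm le] by simp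
    qed
    then show "m \<in> lex_ideal (gotz bs) n" using mm unfolding lex_ideal_def by blast
  qed
qed

definition Gm :: "(nat \<Rightarrow> nat) \<Rightarrow> nat \<Rightarrow> nat \<Rightarrow> nat" where
  "Gm p s = (\<lambda>j. if j < s then p j else if j = s then Suc (p s) else 0)"

lemma shift_mon_app: "shift_mon g i j = (if j = Suc i then Suc (g (Suc i)) else if j = i then g i - 1 else g j)"
  by (simp add: shift_mon_def)

lemma min_gens_L:
  assumes Tn: "T < n" and pT: "0 < p T" and p0: "\<forall>j>T. p j = 0"
  shows "min_gens (Lset n p) = insert p (Gm p ` {..<T})"
proof
  have pm: "p \<in> mons n" using Tn p0 by (auto simp: mons_def)
  have pL: "p \<in> Lset n p" using pm by (simp add: Lset_def)
  show "min_gens (Lset n p) \<subseteq> insert p (Gm p ` {..<T})"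
  proof
    fix g assume g: "g \<in> min_gens (Lset n p)"
    then have gL: "g \<in> Lset n p" and gmin: "\<forall>h \<in> Lset n p. mdvd h g \<longrightarrow> h = g"
      by (auto simp: min_gens_def)
    show "g \<in> insert p (Gm p ` {..<T})"
    proof (cases "g = p")
      case False
      then have "lex_gt g p" using gL lex_total by (auto simp: Lset_def)
      then obtain k where k: "p k < g k" "\<forall>j<k. g j = p j" unfolding lex_gt_def by blast
      show ?thesis
      proof (cases "k < T")
        case True
        have hm: "Gm p k \<in> Lset n p"
        proof -
          have "Gm p k \<in> mons n" using True Tn by (auto simp: mons_def Gm_def)
          moreover have "lex_gt (Gm p k) p" unfolding lex_gt_def by (intro exI[of _ k]) (auto simp: Gm_def)
          ultimately show ?thesis using lex_gt_asym by (auto simp: Lset_def)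
        qed
        have "mdvd (Gm p k) g" using k by (auto simp: mdvd_def Gm_def)
        then have "Gm p k = g" using gmin hm by blast
        then show ?thesis using True by blast
      next
        case False
        have "mdvd p g" unfolding mdvd_def
        proof
          fix j show "p j \<le> g j"
            using k p0 False by (cases "j < k"; cases "j = k") auto
        qed
        then have "p = g" using gmin pL by blast
        then show ?thesis using k by simp
      qed
    qed simp
  qed
next
  have pm: "p \<in> mons n" using Tn p0 by (auto simp: mons_def)
  have pL: "p \<in> Lset n p" using pm by (simp add: Lset_def)
  have Lchar: "h \<in> Lset n p \<Longrightarrow> h = p \<or> lex_gt h p" for h using lex_total by (auto simp: Lset_def)
  show "insert p (Gm p ` {..<T}) \<subseteq> min_gens (Lset n p)"
  proof
    fix g assume "g \<in> insert p (Gm p ` {..<T})"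
    then consider "g = p" | s where "s < T" "g = Gm p s" by blast
    then show "g \<in> min_gens (Lset n p)"
    proof cases
      case 1
      have "\<forall>h \<in> Lset n p. mdvd h p \<longrightarrow> h = p"
      proof (intro ballI impI)
        fix h assume h: "h \<in> Lset n p" "mdvd h p"
        show "h = p"
        proof (rule ccontr)
          assume "h \<noteq> p"
          then have "lex_gt h p" using Lchar h by blast
          then obtain k where "p k < h k" unfolding lex_gt_def by blast
          then show False using h(2) by (auto simp: mdvd_def not_le[symmetric])
        qed
      qed
      then show ?thesis using 1 pL by (simp add: min_gens_def)
    next
      case (2 s)
      have gL: "Gm p s \<in> Lset n p"
      proof -
        have "Gm p s \<in> mons n" using 2 Tn by (auto simp: mons_def Gm_def)
        moreover have "lex_gt (Gm p s) p" unfolding lex_gt_def by (intro exI[of _ s]) (auto simp: Gm_def)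
        ultimately show ?thesis using lex_gt_asym by (auto simp: Lset_def)
      qed
      have "\<forall>h \<in> Lset n p. mdvd h (Gm p s) \<longrightarrow> h = Gm p s"
      proof (intro ballI impI)
        fix h assume h: "h \<in> Lset n p" "mdvd h (Gm p s)"
        have hle: "h j \<le> Gm p s j" for j using h(2) by (simp add: mdvd_def)
        show "h = Gm p s"
        proof (cases "h = p")
          case True
          then have "p T \<le> Gm p s T" using hle by simp
          then show ?thesis using 2 pT by (simp add: Gm_def)
        next
          case False
          then have "lex_gt h p" using Lchar h by blast
          then obtain k where k: "p k < h k" "\<forall>j<k. h j = p j" unfolding lex_gt_def by blast
          have "k = s"
          proof (rule ccontr)
            assume "k \<noteq> s"
            then show False using hle[of k] k(1) by (cases "k < s") (auto simp: Gm_def)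
          qed
          show "h = Gm p s"
          proof
            fix j
            show "h j = Gm p s j"
              using hle[of j] k `k = s` by (cases "j < s"; cases "j = s") (auto simp: Gm_def)
          qed
        qed
      qed
      then show ?thesis using gL 2 by (simp add: min_gens_def)
    qed
  qed
qed

lemma exp_lam:
  assumes Tn: "T < n" and pT: "0 < p T" and p0: "\<forall>j>T. p j = 0"
  shows "{g. expandable (Suc n) (Lset (Suc n) p) g} = {g. expandable n (Lset n p) g}"
proof -
  have M1: "min_gens (Lset (Suc n) p) = insert p (Gm p ` {..<T})"
    by (rule min_gens_L) (use Tn pT p0 in auto)
  have M2: "min_gens (Lset n p) = insert p (Gm p ` {..<T})" using min_gens_L[OF assms] .
  have zero: "g n = 0" if gM: "g \<in> insert p (Gm p ` {..<T})" for g
  proof -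
    consider "g = p" | s where "s < T" "g = Gm p s" using gM by blast
    then show ?thesis
    proof cases
      case 1 then show ?thesis using Tn p0 by simp
    next
      case (2 s) then show ?thesis using Tn by (simp add: Gm_def)
    qed
  qed
  show ?thesis
  proof (intro Collect_cong iffI)
    fix g assume "expandable (Suc n) (Lset (Suc n) p) g"
    then have a: "g \<in> insert p (Gm p ` {..<T})" and b: "\<forall>i. i + 1 < Suc n \<and> 0 < g i \<longrightarrow> shift_mon g i \<notin> insert p (Gm p ` {..<T})"
      unfolding expandable_def M1 by blast+
    have "\<forall>i. i + 1 < n \<and> 0 < g i \<longrightarrow> shift_mon g i \<notin> insert p (Gm p ` {..<T})"
    proof (intro allI impI)
      fix i assume "i + 1 < n \<and> 0 < g i"
      then show "shift_mon g i \<notin> insert p (Gm p ` {..<T})" using b[rule_format, of i] by simp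
    qed
    then show "expandable n (Lset n p) g" using a unfolding expandable_def M2 by blast
  next
    fix g assume g: "expandable n (Lset n p) g"
    show "expandable (Suc n) (Lset (Suc n) p) g"
      unfolding expandable_def M1
    proof (intro conjI allI impI)
      show "g \<in> insert p (Gm p ` {..<T})" using g unfolding expandable_def M2 by blast
      fix i assume i: "i + 1 < Suc n \<and> 0 < g i"
      show "shift_mon g i \<notin> insert p (Gm p ` {..<T})"
      proof (cases "i + 1 < n")
        case True
        have "\<forall>i. i + 1 < n \<and> 0 < g i \<longrightarrow> shift_mon g i \<notin> insert p (Gm p ` {..<T})"
          using g unfolding expandable_def M2 by blast
        then show ?thesis using True i by blast
      next
        case False
        then have "Suc i = n" using i by simp
        then have nz: "shift_mon g i n \<noteq> 0" by (simp add: shift_mon_def)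
        show ?thesis
        proof
          assume "shift_mon g i \<in> insert p (Gm p ` {..<T})"
          then have "shift_mon g i n = 0" by (rule zero)
          then show False using nz by simp
        qed
      qed
    qed
  qed
qed

lemma exp_sig:
  assumes Tn: "T < n" and pT: "0 < p T" and p0: "\<forall>j>T. p j = 0"
    and p'_def: "p' = p(n - 1 := Suc (p (n - 1)))"
  shows "card {g. expandable n (Lset n p) g} \<le> card {g. expandable n (Lset n p') g}"
proof -
  let ?M = "insert p (Gm p ` {..<T})"
  let ?M' = "insert p' (Gm p' ` {..<n - 1})"
  have M: "min_gens (Lset n p) = ?M" using min_gens_L[OF assms(1-3)] .
  have M': "min_gens (Lset n p') = ?M'"
    by (rule min_gens_L) (use Tn p0 in \<open>auto simp: p'_def\<close>)
  have GG: "Gm p' s = Gm p s" if "s < n - 1" for s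
    using that by (auto simp: Gm_def p'_def)
  let ?E = "{g. expandable n (Lset n p) g}"
  let ?E' = "{g. expandable n (Lset n p') g}"
  define f where "f g = (if g = p then p' else g)" for g
  have Gn1: "Gm p s (n - 1) = 0" if "s < T" for s using that Tn by (auto simp: Gm_def)
  have p'n1: "p' (n - 1) = Suc (p (n - 1))" by (simp add: p'_def)
  have inj: "inj_on f ?E"
  proof (rule inj_onI)
    fix x y assume x: "x \<in> ?E" and y: "y \<in> ?E" and e: "f x = f y"
    have xM: "x \<in> ?M" and yM: "y \<in> ?M" using x y unfolding expandable_def M by auto
    show "x = y"
    proof (cases "x = p"; cases "y = p")
      assume "x = p" "y \<noteq> p"
      then have "p' = y" using e by (simp add: f_def)
      then obtain s where "s < T" "p' = Gm p s" using yM `y \<noteq> p` by auto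
      then show ?thesis using Gn1 p'n1 by (metis Zero_not_Suc)
    next
      assume "x \<noteq> p" "y = p"
      then have "p' = x" using e by (simp add: f_def)
      then obtain s where "s < T" "p' = Gm p s" using xM `x \<noteq> p` by auto
      then show ?thesis using Gn1 p'n1 by (metis Zero_not_Suc)
    qed (use e in \<open>auto simp: f_def\<close>)
  qed
  have img: "f ` ?E \<subseteq> ?E'"
  proof
    fix y assume "y \<in> f ` ?E"
    then obtain g where g: "g \<in> ?E" and y: "y = f g" by blast
    have gM: "g \<in> ?M" using g unfolding expandable_def M by auto
    show "y \<in> ?E'"
    proof (cases "g = p")
      case True
      then have yp: "y = p'" using y by (simp add: f_def)
      show ?thesis unfolding yp mem_Collect_eq expandable_def M'
      proof (intro conjI allI impI)
        show "p' \<in> ?M'" by simp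
        fix i assume i: "i + 1 < n \<and> 0 < p' i"
        show "shift_mon p' i \<notin> ?M'"
        proof
          assume "shift_mon p' i \<in> ?M'"
          then consider "shift_mon p' i = p'" | s where "s < n - 1" "shift_mon p' i = Gm p' s" by blast
          then show False
          proof cases
            case 1
            then have "shift_mon p' i i = p' i" by simp
            then have "p' i - 1 = p' i" by (simp add: shift_mon_app)
            then show False using i by linarith
          next
            case (2 s)
            then have "shift_mon p' i (n - 1) = Gm p' s (n - 1)" by simp
            then show False using 2 i by (simp add: shift_mon_app Gm_def p'_def split: if_splits)
          qed
        qed
      qed
    next
      case False
      then obtain s where s: "s < T" "g = Gm p s" using gM by auto
      have yg: "y = g" using y False by (simp add: f_def)
      have sn: "s < n - 1" using s Tn by linarith
      show ?thesis unfolding yg mem_Collect_eq expandable_def M'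
      proof (intro conjI allI impI)
        show "g \<in> ?M'" using s sn GG by auto
        fix i assume i: "i + 1 < n \<and> 0 < g i"
        have notM: "shift_mon g i \<notin> ?M" using g i unfolding expandable_def M by auto
        have isl: "i \<le> s" using i s by (auto simp: Gm_def split: if_splits)
        show "shift_mon g i \<notin> ?M'"
        proof
          assume "shift_mon g i \<in> ?M'"
          then consider "shift_mon g i = p'" | s' where "s' < n - 1" "shift_mon g i = Gm p' s'" by blast
          then show False
          proof cases
            case 1
            then have e: "shift_mon g i (n - 1) = p' (n - 1)" by simp
            show False
            proof (cases "n - 1 = Suc i")
              case True
              then have "s = i" "T = n - 1" using isl s Tn by auto
              then show False using e True pT s by (simp add: shift_mon_app Gm_def p'_def)
            next
              case False
              have a: "n - 1 \<noteq> i" "\<not> n - 1 < s" "n - 1 \<noteq> s" using i sn by auto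
              have "shift_mon g i (n - 1) = 0" using False a s by (simp add: shift_mon_app Gm_def)
              then show False using e p'n1 by simp
            qed
          next
            case (2 s')
            note s2 = 2
            show False
            proof (cases "s' < T")
              case True
              then have "shift_mon g i \<in> ?M" using s2 GG[of s'] Tn by auto
              then show False using notM by blast
            next
              case False
              show False
              proof (cases "s' = T")
                case False
                then have Ts: "T < s'" using \<open>\<not> s' < T\<close> by linarith
                have "shift_mon g i s' = Gm p' s' s'" using s2 by simp
                then show False using Ts isl s by (simp add: shift_mon_app Gm_def)
              next
                case True
                have "shift_mon g i T = Gm p' s' T" using s2 by simp
                moreover have "p' T = p T" using s2 True by (simp add: p'_def)
                ultimately show False using True isl s pT by (simp add: shift_mon_app Gm_def split: if_splits)
              qed
            qed
          qed
        qed
      qed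
    qed
  qed
  have fin: "finite ?E'"
  proof (rule finite_subset[of _ ?M'])
    show "?E' \<subseteq> ?M'" unfolding expandable_def M' by auto
  qed simp
  show ?thesis using card_inj_on_le[OF inj img fin] .
qed

lemma binp_deg_coeff: "degree (binp a b) = b \<and> coeff (binp a b) b = 1 / fact b"
proof -
  let ?q = "\<Prod>i<b. [: of_int a - of_nat i, 1 :] :: real poly"
  have dq: "degree ?q = b"
    by (subst degree_prod_sum_eq) auto
  have lq: "lead_coeff ?q = 1" by (simp add: lead_coeff_prod)
  show ?thesis unfolding binp_def using dq lq by simp
qed

lemma sorted_hd_ge: fixes bs :: "nat list" assumes "sorted_wrt (\<ge>) bs" "k < length bs" shows "bs ! k \<le> hd bs"
proof (cases "k = 0")
  case True then show ?thesis using assms by (cases bs) auto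
next
  case False
  then have "bs ! 0 \<ge> bs ! k" using sorted_wrt_nth_less[OF assms(1), of 0 k] assms(2) by simp
  then show ?thesis using assms(2) by (cases bs) auto
qed

lemma deg_gotz: assumes "bs \<noteq> []" "sorted_wrt (\<ge>) bs" shows "degree (gotz bs) = hd bs"
proof (rule antisym)
  let ?d = "hd bs"
  have le: "bs ! k \<le> ?d" if "k < length bs" for k using sorted_hd_ge[OF assms(2) that] .
  show "degree (gotz bs) \<le> ?d" unfolding gotz_def
    by (rule degree_sum_le) (auto simp: binp_deg_coeff le)
  have trm: "coeff (binp (int (bs ! k) - int k) (bs ! k)) ?d = (if bs ! k = ?d then 1 / fact ?d else 0)"
    if "k < length bs" for k
  proof (cases "bs ! k = ?d")
    case True then show ?thesis using binp_deg_coeff[of "int (bs ! k) - int k" "bs ! k"] by simp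
  next
    case False
    then have "degree (binp (int (bs ! k) - int k) (bs ! k)) < ?d" using le[OF that] binp_deg_coeff by simp
    then show ?thesis using False coeff_eq_0 by simp
  qed
  have "coeff (gotz bs) ?d = (\<Sum>k<length bs. (if bs ! k = ?d then 1 / fact ?d else 0))"
    unfolding gotz_def coeff_sum using trm by simp
  also have "\<dots> \<ge> (if bs ! 0 = ?d then 1 / fact ?d else 0)"
    by (rule member_le_sum) (use assms(1) in auto)
  also have "(if bs ! 0 = ?d then 1 / fact ?d else 0) = (1 / fact ?d :: real)"
    using assms(1) by (cases bs) auto
  finally have "coeff (gotz bs) ?d \<noteq> 0"
    by (metis divide_pos_pos fact_gt_zero not_less order_refl zero_less_one)
  then show "?d \<le> degree (gotz bs)" by (rule le_degree)
qed

lemma gotz_sig: "gotz (bs @ [0]) = 1 + gotz bs"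
  unfolding gotz_snoc by (simp add: binp_def)

lemma count_pvec: "count (mset (map (\<lambda>b. n - Suc b) bs)) j = pvec n bs j"
  by (induction bs) (auto simp: pvec_Cons)

lemma valid_lt: fixes bs :: "nat list" assumes "sorted_wrt (\<ge>) bs" "hd bs < n" shows "\<forall>b\<in>set bs. b < n"
proof
  fix b assume "b \<in> set bs"
  then obtain k where "k < length bs" "b = bs ! k" by (auto simp: in_set_conv_nth)
  then show "b < n" using sorted_hd_ge[OF assms(1), of k] assms(2) by simp
qed

lemma pvec_mons: assumes "\<forall>b\<in>set bs. b < n" shows "pvec n bs \<in> mons n"
  unfolding mons_def
proof (intro CollectI allI impI)
  fix j assume j: "n < j"
  show "pvec n bs j = 0"
  proof (rule ccontr)
    assume "pvec n bs j \<noteq> 0"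
    then have "j < n" using pvec_lt[OF assms, of j] by simp
    then show False using j by simp
  qed
qed

lemma gotz_unique:
  assumes g1: "gotzmann_expr P bs" and g2: "gotzmann_expr P bs'"
  shows "bs = bs'"
proof -
  have v1: "bs \<noteq> []" "sorted_wrt (\<ge>) bs" "P = gotz bs" using g1 by (auto simp: gotzmann_expr_def)
  have v2: "bs' \<noteq> []" "sorted_wrt (\<ge>) bs'" "P = gotz bs'" using g2 by (auto simp: gotzmann_expr_def)
  have hd: "hd bs = hd bs'" using deg_gotz[OF v1(1,2)] deg_gotz[OF v2(1,2)] v1(3) v2(3) by simp
  define n where "n = Suc (hd bs)"
  have b1: "\<forall>b\<in>set bs. b < n" using valid_lt[OF v1(2)] n_def by simp
  have b2: "\<forall>b\<in>set bs'. b < n" using valid_lt[OF v2(2)] n_def hd by simp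
  have L: "Lset n (pvec n bs) = Lset n (pvec n bs')"
    using lex_ideal_eq[OF v1(2) b1] lex_ideal_eq[OF v2(2) b2] v1(3) v2(3) by simp
  have pe: "pvec n bs = pvec n bs'"
  proof (rule ccontr)
    assume ne: "pvec n bs \<noteq> pvec n bs'"
    have m1: "pvec n bs \<in> Lset n (pvec n bs)" using pvec_mons[OF b1] by (simp add: Lset_def)
    have m2: "pvec n bs' \<in> Lset n (pvec n bs')" using pvec_mons[OF b2] by (simp add: Lset_def)
    have "pvec n bs \<in> Lset n (pvec n bs')" using m1 L by simp
    then have "\<not> lex_gt (pvec n bs') (pvec n bs)" by (simp add: Lset_def)
    moreover have "pvec n bs' \<in> Lset n (pvec n bs)" using m2 L by simp
    then have "\<not> lex_gt (pvec n bs) (pvec n bs')" by (simp add: Lset_def)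
    ultimately show False using lex_total[OF ne] by blast
  qed
  have ms: "mset (map (\<lambda>b. n - Suc b) bs) = mset (map (\<lambda>b. n - Suc b) bs')"
    by (rule multiset_eqI) (simp only: count_pvec pe)
  have inv1: "map (\<lambda>j. n - Suc j) (map (\<lambda>b. n - Suc b) bs) = bs"
    by (simp, rule map_idI) (use b1 in auto)
  have inv2: "map (\<lambda>j. n - Suc j) (map (\<lambda>b. n - Suc b) bs') = bs'"
    by (simp, rule map_idI) (use b2 in auto)
  have "mset bs = mset bs'"
    by (metis inv1 inv2 ms mset_map)
  then have mr: "mset (rev bs) = mset (rev bs')" by simp
  have s1: "sorted (rev bs)" using v1(2) by (simp add: sorted_wrt_rev)
  have s2: "sorted (rev bs')" using v2(2) by (simp add: sorted_wrt_rev)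
  have "sort (rev bs') = rev bs" by (rule properties_for_sort[OF mr s1])
  moreover have "sort (rev bs') = rev bs'" by (rule properties_for_sort[OF refl s2])
  ultimately show ?thesis by simp
qed

lemma lambda_gotz:
  assumes "gotzmann_expr P bs" shows "lambda_op P = gotz (map Suc bs)"
proof -
  have "(THE bs. gotzmann_expr P bs) = bs"
    using assms gotz_unique by blast
  then show ?thesis by (simp add: lambda_op_def)
qed

definition fexp :: "nat \<Rightarrow> real poly \<Rightarrow> nat" where
  "fexp c Q = num_expandable (c + degree Q) (lex_ideal Q (c + degree Q))"

lemma fexp_gotz:
  assumes c: "c > 0" and ne: "bs \<noteq> []" and sb: "sorted_wrt (\<ge>) bs"
  defines "n \<equiv> c + hd bs"
  shows "fexp c (gotz bs) = card {g. expandable n (Lset n (pvec n bs)) g}"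
proof -
  have bn: "\<forall>b\<in>set bs. b < n" using valid_lt[OF sb] c n_def by simp
  show ?thesis unfolding fexp_def num_expandable_def deg_gotz[OF ne sb] n_def[symmetric]
    lex_ideal_eq[OF sb bn] ..
qed

lemma pvec_props:
  assumes c: "c > 0" and ne: "bs \<noteq> []" and sb: "sorted_wrt (\<ge>) bs"
  defines "n \<equiv> c + hd bs"
  shows "n - Suc (last bs) < n \<and> 0 < pvec n bs (n - Suc (last bs)) \<and> (\<forall>j > n - Suc (last bs). pvec n bs j = 0)"
proof -
  have bn: "\<forall>b\<in>set bs. b < n" using valid_lt[OF sb] c n_def by simp
  have lin: "last bs \<in> set bs" using ne by simp
  have ge: "\<forall>b\<in>set bs. last bs \<le> b"
  proof
    fix b assume "b \<in> set bs"
    then obtain k where k: "k < length bs" "b = bs ! k" by (auto simp: in_set_conv_nth)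
    have l: "last bs = bs ! (length bs - 1)" using ne by (simp add: last_conv_nth)
    show "last bs \<le> b"
    proof (cases "k = length bs - 1")
      case True then show ?thesis using k l by simp
    next
      case False
      then have "k < length bs - 1" using k by simp
      then show ?thesis using sorted_wrt_nth_less[OF sb, of k "length bs - 1"] k l ne by simp
    qed
  qed
  have "last bs \<in> set (filter (\<lambda>b. n - Suc b = n - Suc (last bs)) bs)" using lin by simp
  then have "0 < pvec n bs (n - Suc (last bs))" unfolding pvec_def by (rule length_pos_if_in_set)
  moreover have "\<forall>j > n - Suc (last bs). pvec n bs j = 0"
  proof (intro allI impI)
    fix j assume j: "n - Suc (last bs) < j"
    show "pvec n bs j = 0"
    proof (rule ccontr)
      assume "pvec n bs j \<noteq> 0"
      then obtain b where "b \<in> set bs" "j = n - Suc b" using pvec_pos by blast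
      then show False using ge j by fastforce
    qed
  qed
  moreover have "n - Suc (last bs) < n" using bn lin by auto
  ultimately show ?thesis by blast
qed

lemma step_lam:
  assumes c: "c > 0" and ne: "bs \<noteq> []" and sb: "sorted_wrt (\<ge>) bs"
  shows "fexp c (gotz bs) \<le> fexp c (gotz (map Suc bs))"
proof -
  define n where "n = c + hd bs"
  have ne': "map Suc bs \<noteq> []" using ne by simp
  have sb': "sorted_wrt (\<ge>) (map Suc bs)" using sb by (simp add: sorted_wrt_map)
  have hd': "c + hd (map Suc bs) = Suc n" using ne by (simp add: n_def hd_map)
  have pv: "pvec (Suc n) (map Suc bs) = pvec n bs"
    by (rule ext) (simp add: pvec_def filter_map o_def)
  obtain T where T: "T < n" "0 < pvec n bs T" "\<forall>j>T. pvec n bs j = 0"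
    using pvec_props[OF c ne sb] n_def by blast
  have "fexp c (gotz (map Suc bs)) = card {g. expandable (Suc n) (Lset (Suc n) (pvec n bs)) g}"
    using fexp_gotz[OF c ne' sb'] hd' pv by simp
  also have "\<dots> = card {g. expandable n (Lset n (pvec n bs)) g}" using exp_lam[OF T] by simp
  also have "\<dots> = fexp c (gotz bs)" using fexp_gotz[OF c ne sb] n_def by simp
  finally show ?thesis by simp
qed

lemma step_sig:
  assumes c: "c > 0" and ne: "bs \<noteq> []" and sb: "sorted_wrt (\<ge>) bs"
  shows "fexp c (gotz bs) \<le> fexp c (gotz (bs @ [0]))"
proof -
  define n where "n = c + hd bs"
  have ne': "bs @ [0] \<noteq> []" by simp
  have sb': "sorted_wrt (\<ge>) (bs @ [0])" using sb by (simp add: sorted_wrt_append)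
  have hd': "hd (bs @ [0]) = hd bs" using ne by simp
  have pv: "pvec n (bs @ [0]) = (pvec n bs)(n - 1 := Suc (pvec n bs (n - 1)))"
    by (simp add: pvec_snoc)
  obtain T where T: "T < n" "0 < pvec n bs T" "\<forall>j>T. pvec n bs j = 0"
    using pvec_props[OF c ne sb] n_def by blast
  have "fexp c (gotz bs) = card {g. expandable n (Lset n (pvec n bs)) g}"
    using fexp_gotz[OF c ne sb] n_def by simp
  also have "\<dots> \<le> card {g. expandable n (Lset n (pvec n (bs @ [0]))) g}"
    by (rule exp_sig[OF T pv])
  also have "\<dots> = fexp c (gotz (bs @ [0]))"
    using fexp_gotz[OF c ne' sb'] hd' n_def by simp
  finally show ?thesis .
qed

lemma main_ind:
  assumes c: "c > 0" and P: "admissible P"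
  shows "admissible (apply_ops \<Lambda> P) \<and> fexp c P \<le> fexp c (apply_ops \<Lambda> P)"
proof (induction \<Lambda>)
  case Nil then show ?case using P by simp
next
  case (Cons a os)
  let ?Q = "apply_ops os P"
  obtain bs where bs: "gotzmann_expr ?Q bs" using Cons.IH unfolding admissible_def by blast
  have v: "bs \<noteq> []" "sorted_wrt (\<ge>) bs" "?Q = gotz bs" using bs by (auto simp: gotzmann_expr_def)
  show ?case
  proof (cases a)
    case Lam
    have e: "apply_ops (a # os) P = gotz (map Suc bs)" using Lam lambda_gotz[OF bs] by simp
    have "gotzmann_expr (gotz (map Suc bs)) (map Suc bs)"
      using v by (simp add: gotzmann_expr_def sorted_wrt_map)
    then have "admissible (apply_ops (a # os) P)" using e by (auto simp: admissible_def)
    moreover have "fexp c ?Q \<le> fexp c (apply_ops (a # os) P)"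
      using step_lam[OF c v(1,2)] e v(3) by simp
    ultimately show ?thesis using Cons.IH by simp
  next
    case Sig
    have e: "apply_ops (a # os) P = gotz (bs @ [0])"
      using Sig v(3) by (simp add: sigma_op_def gotz_sig)
    have "gotzmann_expr (gotz (bs @ [0])) (bs @ [0])"
      using v by (simp add: gotzmann_expr_def sorted_wrt_append)
    then have "admissible (apply_ops (a # os) P)" using e by (auto simp: admissible_def)
    moreover have "fexp c ?Q \<le> fexp c (apply_ops (a # os) P)"
      using step_sig[OF c v(1,2)] e v(3) by simp
    ultimately show ?thesis using Cons.IH by simp
  qed
qed

theorem lemma7p3:
  fixes c :: nat and P :: "real poly" and \<Lambda> :: "hop list"
  assumes "c > 0" and "admissible P"
  shows "num_expandable (c + degree (apply_ops \<Lambda> P)) (lex_ideal (apply_ops \<Lambda> P) (c + degree (apply_ops \<Lambda> P)))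
         \<ge> num_expandable (c + degree P) (lex_ideal P (c + degree P))"
  using main_ind[OF assms, of \<Lambda>] unfolding fexp_def by simp

end
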